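(* Let $M$ be an infinitesimally flexible Kokotsakis mesh with central $n$-gon whose faces are planar, satisfying for every $i$: $v_i,w_i$ not collinear and $a_{i-1},a_i$ not in the plane spanned by $v_i,w_i$. Let $\pi$ be the plane of the central face, and let $l_i$ be the line of intersection of $\pi$ with the plane through $A_i,V_i,W_i$. Assume $l_i$ and $l_{i+1}$ are not parallel for all $i$, let $B_i=l_i\cap l_{i+1}$, assume $B_{i-1}\neq B_i$ and $A_i\notin\{B_{i-1},B_i\}$, and define real numbers $t_i$ by $A_i=t_iB_{i-1}+(1-t_i)B_i$. Then $$\prod_{i=1}^n\frac{1-t_i}{t_i}=(-1)^n .$$
   Context: A Kokotsakis mesh with central $n$-gon consists of a central face with vertices $A_1,\dots,A_n$ (indices in $\mathbb Z/n\mathbb Z$) and further points $V_i,W_i$ such that at each vertex $A_i$ exactly four faces meet, containing the angles $A_{i+1}A_iA_{i-1}$ (central face), $A_{i-1}A_iV_i$, $V_iA_iW_i$, $W_iA_iA_{i+1}$; the face containing $W_iA_iA_{i+1}$ also contains $A_iA_{i+1}V_{i+1}$. Put $a_i=A_{i+1}-A_i$, $v_i=V_i-A_i$, $w_i=W_i-A_i$. Infinitesimally flexible means: there is a nonzero infinitesimal isometric deformation with the central face fixed (velocities of vertices, not all zero, such that each face undergoes an infinitesimal rigid motion and the central face's vertices have zero velocity). Note $A_i\in l_i$ and $B_{i-1},B_i\in l_i$, so $t_i$ is well defined. *)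

theory Defs
  imports "HOL-Analysis.Analysis"
begin

(* Indices are taken in {0..<n}, read cyclically modulo n. *)
definition nxt :: "nat \<Rightarrow> nat \<Rightarrow> nat" where
  "nxt n i = (i + 1) mod n"

definition prv :: "nat \<Rightarrow> nat \<Rightarrow> nat" where
  "prv n i = (i + n - 1) mod n"

definition inf_rigid :: "(real^3) list \<Rightarrow> (real^3) list \<Rightarrow> bool" where
  "inf_rigid ps us \<longleftrightarrow> length ps = length us \<and>
     (\<exists>\<omega> \<tau>. \<forall>k < length ps. cross3 \<omega> (ps ! k) + \<tau> = us ! k)"

(* Kokotsakis mesh with central n-gon A_0..A_{n-1}, extra vertices V_i, W_i.
   Faces: central face {A_i}; corner face (V_i, A_i, W_i);
   side face (A_i, A_{i+1}, V_{i+1}, W_i). *)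

definition inf_flexible ::
  "nat \<Rightarrow> (nat \<Rightarrow> real^3) \<Rightarrow> (nat \<Rightarrow> real^3) \<Rightarrow> (nat \<Rightarrow> real^3) \<Rightarrow> bool" where
  "inf_flexible n A V W \<longleftrightarrow>
     (\<exists>uA uV uW :: nat \<Rightarrow> real^3.
        (\<forall>i<n. uA i = 0) \<and>
        (\<exists>i<n. uA i \<noteq> 0 \<or> uV i \<noteq> 0 \<or> uW i \<noteq> 0) \<and>
        inf_rigid (map A [0..<n]) (map uA [0..<n]) \<and>
        (\<forall>i<n. inf_rigid [V i, A i, W i] [uV i, uA i, uW i]) \<and>
        (\<forall>i<n. inf_rigid [A i, A (nxt n i), V (nxt n i), W i]
                          [uA i, uA (nxt n i), uV (nxt n i), uW i]))"

definition lines_parallel :: "(real^3) set \<Rightarrow> (real^3) set \<Rightarrow> bool" where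
  "lines_parallel L M \<longleftrightarrow>
     (\<exists>d p q. d \<noteq> 0 \<and> L = {p + s *\<^sub>R d | s. True} \<and> M = {q + s *\<^sub>R d | s. True})"

definition lline :: "nat \<Rightarrow> (nat \<Rightarrow> real^3) \<Rightarrow> (nat \<Rightarrow> real^3) \<Rightarrow> (nat \<Rightarrow> real^3) \<Rightarrow> nat \<Rightarrow> (real^3) set" where
  "lline n A V W i = affine hull (A ` {..<n}) \<inter> affine hull {A i, V i, W i}"

end

theory Submission
  imports Defs
begin
lemma cc: "cross3 a (cross3 b c) = (a \<bullet> c) *\<^sub>R b - (a \<bullet> b) *\<^sub>R (c::real^3)"
  by (simp add: cross3_simps forall_3) 
lemma trip: "(x::real^3) \<bullet> cross3 v w = cross3 x v \<bullet> w"
  by (simp add: cross3_simps)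
lemma par: assumes "(a::real^3) \<noteq> 0" "cross3 a x = 0" shows "x = ((a \<bullet> x) / (a \<bullet> a)) *\<^sub>R a"
proof -
  have "cross3 a (cross3 a x) = 0" using assms by simp
  hence "(a \<bullet> x) *\<^sub>R a = (a \<bullet> a) *\<^sub>R x" by (simp add: cc)
  moreover have "a \<bullet> a \<noteq> 0" using assms by simp
  ultimately show ?thesis by (metis (no_types, lifting) divide_inverse_commute scaleR_scaleR right_inverse scaleR_one mult.commute)
qed
lemma decomp: "(cross3 (v::real^3) w \<bullet> cross3 v w) *\<^sub>R x = (cross3 x w \<bullet> cross3 v w) *\<^sub>R v + (cross3 v x \<bullet> cross3 v w) *\<^sub>R w + (x \<bullet> cross3 v w) *\<^sub>R cross3 v w"
  by (simp add: cross3_simps forall_3)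
lemma inspan: assumes "cross3 v w \<noteq> 0" "(x::real^3) \<bullet> cross3 v w = 0" shows "x \<in> span {v, w}"
proof -
  let ?n = "cross3 v w"
  have nn: "?n \<bullet> ?n \<noteq> 0" using assms by simp
  have "x = (1 / (?n \<bullet> ?n)) *\<^sub>R ((?n \<bullet> ?n) *\<^sub>R x)" using nn by simp
  also have "\<dots> = (1 / (?n \<bullet> ?n)) *\<^sub>R ((cross3 x w \<bullet> ?n) *\<^sub>R v + (cross3 v x \<bullet> ?n) *\<^sub>R w)"
    using decomp[of v w x] assms(2) by simp
  also have "\<dots> \<in> span {v, w}"
    by (intro span_mul span_add) (auto intro: span_base)
  finally show ?thesis .
qed
lemma rig4: "inf_rigid [p0,p1,p2,p3] [u0,u1,u2,u3] \<longleftrightarrow> (\<exists>\<omega> \<tau>. cross3 \<omega> p0 + \<tau> = u0 \<and> cross3 \<omega> p1 + \<tau> = u1 \<and> cross3 \<omega> p2 + \<tau> = u2 \<and> cross3 \<omega> p3 + \<tau> = u3)"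
  unfolding inf_rigid_def by (auto simp: less_Suc_eq numeral_eq_Suc)
lemma rig3: "inf_rigid [p0,p1,p2] [u0,u1,u2] \<longleftrightarrow> (\<exists>\<omega> \<tau>. cross3 \<omega> p0 + \<tau> = u0 \<and> cross3 \<omega> p1 + \<tau> = u1 \<and> cross3 \<omega> p2 + \<tau> = u2)"
  unfolding inf_rigid_def by (auto simp: less_Suc_eq numeral_eq_Suc)

lemma idx:
  assumes "n \<ge> 3" "i < n"
  shows "nxt n i < n" "prv n i < n" "prv n (nxt n i) = i" "nxt n (prv n i) = i" "nxt n i \<noteq> i"
  using assms by (auto simp: nxt_def prv_def mod_if split: if_splits)

lemma reparam: fixes q d :: "real^3" and k :: real assumes "k \<noteq> 0" shows "{q + s *\<^sub>R (k *\<^sub>R d) | s. True} = {q + s *\<^sub>R d | s::real. True}"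
proof (intro set_eqI iffI)
  fix x assume "x \<in> {q + s *\<^sub>R (k *\<^sub>R d) | s. True}"
  then obtain s where "x = q + s *\<^sub>R (k *\<^sub>R d)" by blast
  then show "x \<in> {q + s *\<^sub>R d | s::real. True}" by (intro CollectI exI[of _ "s*k"]) (simp add: scaleR_scaleR)
next
  fix x assume "x \<in> {q + s *\<^sub>R d | s::real. True}"
  then obtain s where "x = q + s *\<^sub>R d" by blast
  then show "x \<in> {q + s *\<^sub>R (k *\<^sub>R d) | s. True}" using assms by (intro CollectI exI[of _ "s/k"]) simp
qed

lemma bij_nxt: "n \<ge> 3 \<Longrightarrow> bij_betw (nxt n) {..<n} {..<n}"
  by (rule bij_betw_byWitness[where f'="prv n"]) (auto simp: idx)
lemma bij_prv: "n \<ge> 3 \<Longrightarrow> bij_betw (prv n) {..<n} {..<n}"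
  by (rule bij_betw_byWitness[where f'="nxt n"]) (auto simp: idx)
theorem theorem3:
  fixes n :: nat and A V W B :: "nat \<Rightarrow> real^3" and t :: "nat \<Rightarrow> real"
  assumes n3: "n \<ge> 3"
    and distinct: "inj_on A {..<n}" "inj_on V {..<n}" "inj_on W {..<n}"
        "A ` {..<n} \<inter> V ` {..<n} = {}" "A ` {..<n} \<inter> W ` {..<n} = {}"
        "V ` {..<n} \<inter> W ` {..<n} = {}"
    and central_plane: "aff_dim (A ` {..<n}) = 2"
    and side_planar: "\<forall>i<n. coplanar {A i, A (nxt n i), V (nxt n i), W i}"
    and flex: "inf_flexible n A V W"
    and vw: "\<forall>i<n. \<not> collinear {0, V i - A i, W i - A i}"
    and a_prev: "\<forall>i<n. A i - A (prv n i) \<notin> span {V i - A i, W i - A i}"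
    and a_next: "\<forall>i<n. A (nxt n i) - A i \<notin> span {V i - A i, W i - A i}"
    and nonpar: "\<forall>i<n. \<not> lines_parallel (lline n A V W i) (lline n A V W (nxt n i))"
    and B: "\<forall>i<n. B i \<in> lline n A V W i \<inter> lline n A V W (nxt n i)"
    and Bdist: "\<forall>i<n. B (prv n i) \<noteq> B i"
    and AB: "\<forall>i<n. A i \<noteq> B (prv n i) \<and> A i \<noteq> B i"
    and t: "\<forall>i<n. A i = t i *\<^sub>R B (prv n i) + (1 - t i) *\<^sub>R B i"
  shows "(\<Prod>i<n. (1 - t i) / t i) = (-1) ^ n"
proof -
  note ix = idx[OF n3]
  have "aff_dim (A ` {..<n}) < int DIM(real^3)" using central_plane by simp
  then obtain N b where N0: "N \<noteq> 0" and Nsub: "A ` {..<n} \<subseteq> {x. N \<bullet> x = b}"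
    using aff_lowdim_subset_hyperplane by blast
  have Nhull: "affine hull (A ` {..<n}) \<subseteq> {x. N \<bullet> x = b}"
    by (rule hull_minimal[where S=affine, OF Nsub affine_hyperplane[of N b]])
  have NA: "N \<bullet> A i = b" if "i<n" for i using Nsub that by auto
  define v where "v i = V i - A i" for i
  define w where "w i = W i - A i" for i
  define nn where "nn i = cross3 (v i) (w i)" for i
  have nn0: "nn i \<noteq> 0" if "i<n" for i using vw that by (simp add: nn_def v_def w_def cross_eq_0)
  have Phull: "affine hull {A i, V i, W i} \<subseteq> {x. nn i \<bullet> x = nn i \<bullet> A i}" for i
  proof (rule hull_minimal[where S=affine, OF _ affine_hyperplane[of "nn i" "nn i \<bullet> A i"]])
    have "nn i \<bullet> v i = 0" "nn i \<bullet> w i = 0" unfolding nn_def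
      by (simp_all add: dot_cross_self inner_commute)
    then show "{A i, V i, W i} \<subseteq> {x. nn i \<bullet> x = nn i \<bullet> A i}"
      by (auto simp: v_def w_def inner_diff_right)
  qed
  have lmem: "N \<bullet> x = b \<and> nn i \<bullet> x = nn i \<bullet> A i" if "x \<in> lline n A V W i" for i x
    using that Nhull Phull unfolding lline_def by blast
  define a where "a i = A (nxt n i) - A i" for i
  have a0: "a i \<noteq> 0" if "i<n" for i
    using that ix distinct(1) unfolding a_def by (metis eq_iff_diff_eq_0 inj_onD lessThan_iff)
  have aN: "a i \<bullet> N = 0" if "i<n" for i
    using that ix NA unfolding a_def by (simp add: inner_diff_left inner_diff_right inner_commute)
  define f where "f i = cross3 N (nn i)" for i
  have perp: "cross3 x (f i) = 0" if "x \<bullet> N = 0" "x \<bullet> nn i = 0" for i x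
    using that unfolding f_def by (simp add: cc)
  have f0: "f i \<noteq> 0" if "i<n" for i
  proof
    assume "f i = 0"
    then have "nn i = ((N \<bullet> nn i) / (N \<bullet> N)) *\<^sub>R N" using par[OF N0] unfolding f_def by blast
    then have "a i \<bullet> nn i = 0" using aN[OF that] by (metis inner_scaleR_right mult_zero_right)
    then have "a i \<in> span {v i, w i}" using inspan nn0[OF that] unfolding nn_def by blast
    then show False using a_next that unfolding a_def v_def w_def by blast
  qed
  have fpar: "x = ((f i \<bullet> x) / (f i \<bullet> f i)) *\<^sub>R f i" if "i<n" "x \<bullet> N = 0" "x \<bullet> nn i = 0" for i x
  proof -
    have "cross3 (f i) x = 0" using perp[OF that(2,3)] by (metis cross_skew neg_equal_0_iff_equal)
    then show ?thesis using par[OF f0[OF that(1)]] by blast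
  qed
  have perp2: "cross3 x y = 0" if "i<n" "x \<bullet> N = 0" "x \<bullet> nn i = 0" "y \<bullet> N = 0" "y \<bullet> nn i = 0" for i x y
  proof -
    have "cross3 x y = cross3 (((f i \<bullet> x) / (f i \<bullet> f i)) *\<^sub>R f i) (((f i \<bullet> y) / (f i \<bullet> f i)) *\<^sub>R f i)"
      using fpar[OF that(1,2,3)] fpar[OF that(1,4,5)] by metis
    then show ?thesis by (simp add: cross_mult_left cross_mult_right)
  qed
  define e where "e i = B i - B (prv n i)" for i
  have e0: "e i \<noteq> 0" if "i<n" for i using Bdist that unfolding e_def by auto
  have Bl: "B i \<in> lline n A V W i" "B (prv n i) \<in> lline n A V W i" if "i<n" for i
    using B that ix by (metis IntD1, metis IntD2)
  have eN: "e i \<bullet> N = 0" and enn: "e i \<bullet> nn i = 0" if "i<n" for i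
  proof -
    have 1: "N \<bullet> B i = b" "nn i \<bullet> B i = nn i \<bullet> A i" using lmem[OF Bl(1)[OF that]] by auto
    have 2: "N \<bullet> B (prv n i) = b" "nn i \<bullet> B (prv n i) = nn i \<bullet> A i" using lmem[OF Bl(2)[OF that]] by auto
    show "e i \<bullet> N = 0" "e i \<bullet> nn i = 0" unfolding e_def using 1 2
      by (metis inner_commute inner_diff_right right_minus_eq)+
  qed
  have lineq: "lline n A V W i = {B i + s *\<^sub>R e i | s. True}" if "i<n" for i
  proof (intro set_eqI iffI)
    fix x assume x: "x \<in> lline n A V W i"
    have "(x - B i) \<bullet> N = 0" "(x - B i) \<bullet> nn i = 0"
      using lmem[OF x] lmem[OF Bl(1)[OF that]] by (metis inner_commute inner_diff_right right_minus_eq)+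
    then have xe: "x - B i = ((f i \<bullet> (x - B i)) / (f i \<bullet> f i)) *\<^sub>R f i" using fpar that by blast
    have ee: "e i = ((f i \<bullet> e i) / (f i \<bullet> f i)) *\<^sub>R f i" using fpar that eN enn by blast
    define \<epsilon> where "\<epsilon> = (f i \<bullet> e i) / (f i \<bullet> f i)"
    define \<kappa> where "\<kappa> = (f i \<bullet> (x - B i)) / (f i \<bullet> f i)"
    have "\<epsilon> \<noteq> 0" using ee e0[OF that] unfolding \<epsilon>_def by (metis scaleR_zero_left)
    have "x = B i + (\<kappa> / \<epsilon>) *\<^sub>R e i"
    proof -
      have "(\<kappa> / \<epsilon>) *\<^sub>R e i = (\<kappa> / \<epsilon>) *\<^sub>R (\<epsilon> *\<^sub>R f i)" using ee unfolding \<epsilon>_def by metis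
      also have "\<dots> = \<kappa> *\<^sub>R f i" using \<open>\<epsilon> \<noteq> 0\<close> by simp
      also have "\<dots> = x - B i" using xe unfolding \<kappa>_def by metis
      finally show ?thesis by simp
    qed
    then show "x \<in> {B i + s *\<^sub>R e i | s. True}" by blast
  next
    fix x assume "x \<in> {B i + s *\<^sub>R e i | s. True}"
    then obtain s where xs: "x = B i + s *\<^sub>R e i" by blast
    have xs2: "x = (1 - (1 + s)) *\<^sub>R B (prv n i) + (1 + s) *\<^sub>R B i"
      unfolding xs e_def by (simp add: algebra_simps)
    have "affine (lline n A V W i)" unfolding lline_def by (intro affine_Int affine_affine_hull)
    then show "x \<in> lline n A V W i" unfolding xs2 affine_alt using Bl[OF that] by blast
  qed
  define D where "D i = N \<bullet> cross3 (e i) (e (nxt n i))" for i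
  have D0: "D i \<noteq> 0" if "i<n" for i
  proof
    assume D: "D i = 0"
    let ?j = "nxt n i"
    have j: "?j < n" using ix that by blast
    define z where "z = cross3 (e i) (e ?j)"
    have "cross3 N z = 0" unfolding z_def using eN[OF that] eN[OF j]
      by (simp add: cc inner_commute)
    then have "z = ((N \<bullet> z) / (N \<bullet> N)) *\<^sub>R N" using par[OF N0] by blast
    then have "z = 0" using D unfolding D_def z_def by simp
    then have ej: "e ?j = ((e i \<bullet> e ?j) / (e i \<bullet> e i)) *\<^sub>R e i"
      using par[OF e0[OF that]] unfolding z_def by blast
    define k where "k = (e i \<bullet> e ?j) / (e i \<bullet> e i)"
    have k0: "k \<noteq> 0" using ej e0[OF j] unfolding k_def by (metis scaleR_zero_left)
    have "lline n A V W ?j = {B ?j + s *\<^sub>R e i | s. True}"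
      using lineq[OF j] ej reparam[OF k0] unfolding k_def by metis
    moreover have "lline n A V W i = {B i + s *\<^sub>R e i | s. True}" using lineq[OF that] .
    ultimately have "lines_parallel (lline n A V W i) (lline n A V W ?j)"
      unfolding lines_parallel_def using e0[OF that] by blast
    then show False using nonpar that by blast
  qed
  obtain uA uV uW where uA0: "\<forall>i<n. uA i = 0" and nontriv: "\<exists>i<n. uA i \<noteq> 0 \<or> uV i \<noteq> 0 \<or> uW i \<noteq> 0"
    and corner: "\<forall>i<n. inf_rigid [V i, A i, W i] [uV i, uA i, uW i]"
    and side: "\<forall>i<n. inf_rigid [A i, A (nxt n i), V (nxt n i), W i] [uA i, uA (nxt n i), uV (nxt n i), uW i]"
    using flex unfolding inf_flexible_def by blast
  have "\<forall>i. \<exists>\<omega> \<tau>. i < n \<longrightarrow> cross3 \<omega> (A i) + \<tau> = uA i \<and> cross3 \<omega> (A (nxt n i)) + \<tau> = uA (nxt n i)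
      \<and> cross3 \<omega> (V (nxt n i)) + \<tau> = uV (nxt n i) \<and> cross3 \<omega> (W i) + \<tau> = uW i"
    using side by (simp add: rig4)
  then obtain om tau where omt: "\<And>i. i < n \<Longrightarrow> cross3 (om i) (A i) + tau i = uA i \<and> cross3 (om i) (A (nxt n i)) + tau i = uA (nxt n i)
      \<and> cross3 (om i) (V (nxt n i)) + tau i = uV (nxt n i) \<and> cross3 (om i) (W i) + tau i = uW i"
    by metis
  have "\<forall>i. \<exists>\<omega> \<tau>. i < n \<longrightarrow> cross3 \<omega> (V i) + \<tau> = uV i \<and> cross3 \<omega> (A i) + \<tau> = uA i
      \<and> cross3 \<omega> (W i) + \<tau> = uW i"
    using corner by (simp add: rig3)
  then obtain sg rh where sgr: "\<And>i. i < n \<Longrightarrow> cross3 (sg i) (V i) + rh i = uV i \<and> cross3 (sg i) (A i) + rh i = uA i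
      \<and> cross3 (sg i) (W i) + rh i = uW i"
    by metis
  have uVs: "uV i = cross3 (sg i) (v i)" and uWs: "uW i = cross3 (sg i) (w i)" if "i<n" for i
  proof -
    have "rh i = - cross3 (sg i) (A i)" using sgr[OF that] uA0 that by (simp add: eq_neg_iff_add_eq_0 add.commute)
    then show "uV i = cross3 (sg i) (v i)" "uW i = cross3 (sg i) (w i)"
      using sgr[OF that] unfolding v_def w_def by (simp_all add: Cross3.right_diff_distrib)
  qed
  have om_a: "cross3 (om i) (a i) = 0" if "i<n" for i
  proof -
    have "cross3 (om i) (A (nxt n i)) + tau i = cross3 (om i) (A i) + tau i" using omt[OF that] uA0 that ix by auto
    then show ?thesis unfolding a_def by (simp add: Cross3.right_diff_distrib)
  qed
  define lam where "lam i = (a i \<bullet> om i) / (a i \<bullet> a i)" for i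
  have om_eq: "om i = lam i *\<^sub>R a i" if "i<n" for i
  proof -
    have "cross3 (a i) (om i) = 0" using om_a[OF that] by (metis cross_skew neg_equal_0_iff_equal)
    then show ?thesis using par[OF a0[OF that]] unfolding lam_def by blast
  qed
  have uWo: "uW i = cross3 (om i) (w i)" if "i<n" for i
  proof -
    have "tau i = - cross3 (om i) (A i)" using omt[OF that] uA0 that by (simp add: eq_neg_iff_add_eq_0 add.commute)
    then show ?thesis using omt[OF that] unfolding w_def by (simp add: Cross3.right_diff_distrib)
  qed
  have uVo: "uV (nxt n i) = cross3 (om i) (v (nxt n i))" if "i<n" for i
  proof -
    have "tau i = - cross3 (om i) (A (nxt n i))" using omt[OF that] uA0 that ix by (simp add: eq_neg_iff_add_eq_0 add.commute)
    then show ?thesis using omt[OF that] unfolding v_def by (simp add: Cross3.right_diff_distrib)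
  qed
  define X where "X i = lam i * D i" for i
  have tne0: "t i \<noteq> 0" and t1ne0: "1 - t i \<noteq> 0" if "i<n" for i
  proof -
    show "t i \<noteq> 0" using t AB that by force
    show "1 - t i \<noteq> 0" using t AB that by force
  qed
  have R: "t (prv n i) * X (prv n i) + (1 - t (nxt n i)) * X i = 0" if "i<n" for i
  proof -
    let ?p = "prv n i" and ?j = "nxt n i"
    have p: "?p < n" and j: "?j < n" and pj: "nxt n ?p = i" "prv n ?j = i" using ix that by auto
    have c1: "(om ?p - sg i) \<bullet> nn i = 0"
    proof -
      have "cross3 (om ?p - sg i) (v i) = 0" using uVo[OF p] uVs[OF that] pj by (simp add: Cross3.left_diff_distrib)
      then show ?thesis unfolding nn_def by (simp add: trip)
    qed
    have c2: "(om i - sg i) \<bullet> nn i = 0"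
    proof -
      have "cross3 (om i - sg i) (w i) = 0" using uWo[OF that] uWs[OF that] by (simp add: Cross3.left_diff_distrib)
      then have "(om i - sg i) \<bullet> cross3 (w i) (v i) = 0" by (simp add: trip)
      then show ?thesis unfolding nn_def by (metis cross_skew inner_minus_right neg_equal_0_iff_equal)
    qed
    define c where "c = om ?p - om i"
    have cnn: "c \<bullet> nn i = 0" using c1 c2 unfolding c_def by (simp add: inner_diff_left)
    have cN: "c \<bullet> N = 0" unfolding c_def using om_eq[OF p] om_eq[OF that] aN[OF p] aN[OF that]
      by (simp add: inner_diff_left)
    have ec: "cross3 (e i) c = 0" using perp2[OF that eN[OF that] enn[OF that] cN cnn] .
    have ap: "a ?p = (1 - t i) *\<^sub>R e i + t ?p *\<^sub>R e ?p"
    proof -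
      have e1: "A ?p = t ?p *\<^sub>R B (prv n ?p) + (1 - t ?p) *\<^sub>R B ?p" using t p by blast
      have e2: "A i = t i *\<^sub>R B ?p + (1 - t i) *\<^sub>R B i" using t that by blast
      have "a ?p = A i - A ?p" unfolding a_def pj ..
      also have "\<dots> = (t i *\<^sub>R B ?p + (1 - t i) *\<^sub>R B i) - (t ?p *\<^sub>R B (prv n ?p) + (1 - t ?p) *\<^sub>R B ?p)"
        using e1 e2 by simp
      also have "\<dots> = (1 - t i) *\<^sub>R e i + t ?p *\<^sub>R e ?p" unfolding e_def by (simp add: algebra_simps)
      finally show ?thesis .
    qed
    have ai: "a i = t i *\<^sub>R e i + (1 - t ?j) *\<^sub>R e ?j"
    proof -
      have e1: "A ?j = t ?j *\<^sub>R B i + (1 - t ?j) *\<^sub>R B ?j" using t j pj by metis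
      have e2: "A i = t i *\<^sub>R B ?p + (1 - t i) *\<^sub>R B i" using t that by blast
      have "a i = A ?j - A i" unfolding a_def ..
      also have "\<dots> = (t ?j *\<^sub>R B i + (1 - t ?j) *\<^sub>R B ?j) - (t i *\<^sub>R B ?p + (1 - t i) *\<^sub>R B i)"
        using e1 e2 by simp
      also have "\<dots> = t i *\<^sub>R e i + (1 - t ?j) *\<^sub>R e ?j" unfolding e_def pj by (simp add: algebra_simps)
      finally show ?thesis .
    qed
    have cdef: "c = lam ?p *\<^sub>R a ?p - lam i *\<^sub>R a i" unfolding c_def using om_eq[OF p] om_eq[OF that] by simp
    have "cross3 (e i) (lam ?p *\<^sub>R a ?p - lam i *\<^sub>R a i) = (lam ?p * t ?p) *\<^sub>R cross3 (e i) (e ?p) - (lam i * (1 - t ?j)) *\<^sub>R cross3 (e i) (e ?j)"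
      unfolding ap ai by (simp add: Cross3.right_diff_distrib cross_add_right cross_mult_right algebra_simps)
    then have "cross3 (e i) c = (lam ?p * t ?p) *\<^sub>R cross3 (e i) (e ?p) - (lam i * (1 - t ?j)) *\<^sub>R cross3 (e i) (e ?j)"
      using cdef by simp
    also have "cross3 (e i) (e ?p) = - cross3 (e ?p) (e i)" by (rule cross_skew)
    finally have "N \<bullet> ((- (lam ?p * t ?p)) *\<^sub>R cross3 (e ?p) (e i) - (lam i * (1 - t ?j)) *\<^sub>R cross3 (e i) (e ?j)) = 0"
      using ec by simp
    then have "- (lam ?p * t ?p) * D ?p - (lam i * (1 - t ?j)) * D i = 0"
      unfolding D_def pj by (simp add: inner_diff_right)
    then show ?thesis unfolding X_def by (simp add: algebra_simps)
  qed
  have Xnext: "X (nxt n i) = 0" if "i<n" "X i = 0" for i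
  proof -
    have j: "nxt n i < n" using ix that by auto
    have "(1 - t (nxt n (nxt n i))) * X (nxt n i) = 0" using R[OF j] that ix by simp
    then show ?thesis using t1ne0 ix j by auto
  qed
  have "\<exists>j<n. lam j \<noteq> 0"
  proof (rule ccontr)
    assume "\<not> (\<exists>j<n. lam j \<noteq> 0)"
    then have l0: "\<forall>j<n. lam j = 0" by blast
    have "uA i = 0 \<and> uV i = 0 \<and> uW i = 0" if "i<n" for i
    proof -
      have p: "prv n i < n" using ix that by auto
      have "uV i = uV (nxt n (prv n i))" using ix that by simp
      also have "\<dots> = 0" using uVo[OF p] om_eq[OF p] l0 p by simp
      finally show ?thesis using uWo[OF that] om_eq[OF that] l0 that uA0 by simp
    qed
    then show False using nontriv by blast
  qed
  then obtain j where j: "j<n" "lam j \<noteq> 0" by blast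
  have Xnz: "X i \<noteq> 0" if "i<n" for i
  proof
    assume "X i = 0"
    have "X ((i + m) mod n) = 0" for m
    proof (induction m)
      case 0 then show ?case using \<open>X i = 0\<close> that by simp
    next
      case (Suc m)
      have "(i + m) mod n < n" using that by simp
      from Xnext[OF this Suc.IH] show ?case by (simp add: nxt_def mod_Suc_eq)
    qed
    from this[of "j + n - i"] have "X j = 0" using that j by simp
    then show False using j D0 unfolding X_def by simp
  qed
  have quot: "(1 - t (nxt n i)) / t (prv n i) = (-1) * (X (prv n i) / X i)" if "i<n" for i
  proof -
    have "(1 - t (nxt n i)) * X i = - (t (prv n i) * X (prv n i))" using R[OF that] by simp
    then show ?thesis using Xnz[OF that] tne0 ix that by (simp add: field_simps)
  qed
  have "(\<Prod>i<n. (1 - t i) / t i) = (\<Prod>i<n. 1 - t i) / (\<Prod>i<n. t i)" by (rule prod_dividef)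
  also have "(\<Prod>i<n. 1 - t i) = (\<Prod>i<n. 1 - t (nxt n i))"
    using prod.reindex_bij_betw[OF bij_nxt[OF n3], of "\<lambda>i. 1 - t i"] by simp
  also have "(\<Prod>i<n. t i) = (\<Prod>i<n. t (prv n i))"
    using prod.reindex_bij_betw[OF bij_prv[OF n3], of t] by simp
  also have "(\<Prod>i<n. 1 - t (nxt n i)) / (\<Prod>i<n. t (prv n i)) = (\<Prod>i<n. (1 - t (nxt n i)) / t (prv n i))"
    by (rule prod_dividef[symmetric])
  also have "\<dots> = (\<Prod>i<n. (-1) * (X (prv n i) / X i))" using quot by (intro prod.cong) auto
  also have "\<dots> = (-1) ^ n * ((\<Prod>i<n. X (prv n i)) / (\<Prod>i<n. X i))"
    by (subst prod.distrib) (simp add: prod_dividef)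
  also have "(\<Prod>i<n. X (prv n i)) = (\<Prod>i<n. X i)"
    using prod.reindex_bij_betw[OF bij_prv[OF n3], of X] by simp
  also have "(\<Prod>i<n. X i) \<noteq> 0" using Xnz by (simp add: prod_zero_iff)
  then have "(\<Prod>i<n. X i) / (\<Prod>i<n. X i) = 1" by simp
  finally show ?thesis by simp
qed

end
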